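(* Let $F$ be a graph with chromatic number $3$ that has a color-critical edge. Then there exists $n_0$ such that for every $n\ge n_0$, \[\mathrm{ex}(n,P_3,F)=\mathcal{N}(P_3,T_2(n)).\] In other words, $P_3$ is $F$-Tur\'an-good.
   Context: For graphs $H$ and $G$, $\mathcal{N}(H,G)$ denotes the number of (not necessarily induced) subgraphs of $G$ isomorphic to $H$. For graphs $H,F$, $\mathrm{ex}(n,H,F)$ is the maximum of $\mathcal{N}(H,G)$ over all $F$-free graphs $G$ on $n$ vertices. $P_3$ is the path on $3$ vertices (two edges). $T_r(n)$ is the Tur\'an graph: the complete $r$-partite graph on $n$ vertices whose part sizes are $\lfloor n/r\rfloor$ or $\lceil n/r\rceil$. An edge $e$ of $F$ is color-critical if deleting $e$ decreases the chromatic number of $F$. If $F$ is $k$-chromatic and $H$ does not contain $F$, $H$ is called $F$-Tur\'an-good if $\mathrm{ex}(n,H,F)=\mathcal{N}(H,T_{k-1}(n))$ for all sufficiently large $n$. *)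

theory Defs
  imports Main
begin

type_synonym 'a graph = "'a set \<times> 'a set set"

definition wf_graph :: "'a graph \<Rightarrow> bool" where
  "wf_graph G \<longleftrightarrow> finite (fst G) \<and>
     snd G \<subseteq> {{u, v} | u v. u \<in> fst G \<and> v \<in> fst G \<and> u \<noteq> v}"

definition graph_iso :: "'a graph \<Rightarrow> 'b graph \<Rightarrow> bool" where
  "graph_iso G H \<longleftrightarrow> (\<exists>f. bij_betw f (fst G) (fst H) \<and>
     (\<forall>u\<in>fst G. \<forall>v\<in>fst G. {u, v} \<in> snd G \<longleftrightarrow> {f u, f v} \<in> snd H))"

definition subgraphs :: "'a graph \<Rightarrow> 'a graph set" where
  "subgraphs G = {S. wf_graph S \<and> fst S \<subseteq> fst G \<and> snd S \<subseteq> snd G}"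

definition count_copies :: "'b graph \<Rightarrow> 'a graph \<Rightarrow> nat" where
  "count_copies H G = card {S \<in> subgraphs G. graph_iso S H}"

definition contains :: "'a graph \<Rightarrow> 'b graph \<Rightarrow> bool" where
  "contains G F \<longleftrightarrow> (\<exists>S \<in> subgraphs G. graph_iso S F)"

definition F_free :: "'b graph \<Rightarrow> 'a graph \<Rightarrow> bool" where
  "F_free F G \<longleftrightarrow> \<not> contains G F"

definition proper_coloring :: "'a graph \<Rightarrow> nat \<Rightarrow> ('a \<Rightarrow> nat) \<Rightarrow> bool" where
  "proper_coloring G k c \<longleftrightarrow> (\<forall>v\<in>fst G. c v < k) \<and>
     (\<forall>u\<in>fst G. \<forall>v\<in>fst G. {u, v} \<in> snd G \<longrightarrow> c u \<noteq> c v)"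

definition chromatic_number :: "'a graph \<Rightarrow> nat" where
  "chromatic_number G = (LEAST k. \<exists>c. proper_coloring G k c)"

definition color_critical_edge :: "'a graph \<Rightarrow> 'a set \<Rightarrow> bool" where
  "color_critical_edge F e \<longleftrightarrow> e \<in> snd F \<and>
     chromatic_number (fst F, snd F - {e}) < chromatic_number F"

text \<open>Graphs on the vertex set {0..<n}; every n-vertex graph is isomorphic to one.\<close>
definition graphs_on :: "nat \<Rightarrow> nat graph set" where
  "graphs_on n = {G. wf_graph G \<and> fst G = {0..<n}}"

definition ex_gen :: "nat \<Rightarrow> 'b graph \<Rightarrow> 'c graph \<Rightarrow> nat" where
  "ex_gen n H F = Max {count_copies H G | G. G \<in> graphs_on n \<and> F_free F G}"

text \<open>Turan graph T_r(n): vertex i lies in part (i mod r); parts have sizes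
  floor(n/r) or ceil(n/r); edges join vertices in different parts.\<close>
definition turan_graph :: "nat \<Rightarrow> nat \<Rightarrow> nat graph" where
  "turan_graph r n = ({0..<n},
     {{u, v} | u v. u < n \<and> v < n \<and> u mod r \<noteq> v mod r})"

definition P3 :: "nat graph" where
  "P3 = ({0, 1, 2}, {{0, 1}, {1, 2}})"

end

theory Submission
  imports Defs Complex_Main
begin


lemma sum_card_swap:
  assumes "finite A" "finite B"
  shows "(\<Sum>a\<in>A. card {b\<in>B. R a b}) = (\<Sum>b\<in>B. card {a\<in>A. R a b})"
proof -
  have "(\<Sum>a\<in>A. card {b\<in>B. R a b}) = (\<Sum>a\<in>A. \<Sum>b\<in>{b. b\<in>B \<and> R a b}. (1::nat))"
    by simp
  also have "\<dots> = (\<Sum>b\<in>B. \<Sum>a\<in>{a. a\<in>A \<and> R a b}. (1::nat))"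
    by (rule sum.swap_restrict[OF assms])
  also have "\<dots> = (\<Sum>b\<in>B. card {a\<in>A. R a b})" by simp
  finally show ?thesis .
qed

lemma sum_swap_weight:
  assumes "finite V"
  shows "(\<Sum>v\<in>V. \<Sum>u\<in>{u\<in>V. R u v}. (f u::real)) = (\<Sum>u\<in>V. f u * real (card {v\<in>V. R u v}))"
proof -
  have "(\<Sum>v\<in>V. \<Sum>u\<in>{u. u\<in>V \<and> R u v}. f u) = (\<Sum>u\<in>V. \<Sum>v\<in>{v. v\<in>V \<and> R u v}. f u)"
    using sum.swap_restrict[OF assms assms, of "\<lambda>v u. f u" "\<lambda>v u. R u v"] by simp
  then show ?thesis by (simp add: mult.commute)
qed

lemma card3_incl_excl:
  assumes "finite A" "finite B" "finite C"
  shows "card A + card B + card C \<le> card (A \<union> B \<union> C) + card (A \<inter> B) + card (B \<inter> C) + card (A \<inter> C)"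
proof -
  have 1: "card (A \<union> B) + card (A \<inter> B) = card A + card B" using card_Un_Int assms by (metis)
  have 2: "card (A \<union> B \<union> C) + card ((A \<union> B) \<inter> C) = card (A \<union> B) + card C"
    using card_Un_Int[of "A \<union> B" C] assms by simp
  have "(A \<union> B) \<inter> C = (A \<inter> C) \<union> (B \<inter> C)" by blast
  then have 3: "card ((A \<union> B) \<inter> C) \<le> card (A \<inter> C) + card (B \<inter> C)"
    by (metis card_Un_le)
  show ?thesis using 1 2 3 by linarith
qed

locale gr =
  fixes V :: "'a set" and E :: "'a set set"
  assumes wf: "wf_graph (V, E)"
begin

definition N :: "'a \<Rightarrow> 'a set" where "N v = {u\<in>V. {u,v} \<in> E}"

abbreviation d :: "'a \<Rightarrow> nat" where "d v \<equiv> card (N v)"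

definition Q :: real where "Q = (\<Sum>v\<in>V. real (d v) * (real (d v) - 1))"

definition W :: "'a \<Rightarrow> real" where
  "W x = real (d x) * (real (d x) - 1) + 2 * (\<Sum>u\<in>N x. real (d u) - 1)"

definition hfree :: "nat \<Rightarrow> bool" where
  "hfree t \<longleftrightarrow> \<not> (\<exists>u v Y Z. {u,v} \<in> E \<and> Y \<subseteq> N u \<inter> N v \<and> card Y = t \<and> Z \<subseteq> V \<and> card Z = t
      \<and> Z \<inter> Y = {} \<and> u \<notin> Z \<and> v \<notin> Z \<and> (\<forall>z\<in>Z. \<forall>y\<in>Y. {z,y} \<in> E))"

lemma finV: "finite V" using wf unfolding wf_graph_def by simp

lemma edge: "{u,v} \<in> E \<Longrightarrow> u \<noteq> v \<and> u \<in> V \<and> v \<in> V"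
  using wf unfolding wf_graph_def by (auto simp: doubleton_eq_iff)

lemma N_sub: "N v \<subseteq> V" unfolding N_def by auto

lemma finN: "finite (N v)" using N_sub finV finite_subset by blast

lemma N_iff: "u \<in> N v \<longleftrightarrow> {u,v} \<in> E" unfolding N_def using edge by auto

lemma N_sym: "u \<in> N v \<longleftrightarrow> v \<in> N u" unfolding N_iff by (simp add: insert_commute)

lemma N_irr: "v \<notin> N v" using edge[of v v] N_iff[of v v] by auto

lemma d_le: "d v \<le> card V" using N_sub finV card_mono by blast

lemma sum_d_nb: "(\<Sum>u\<in>N v. real (d u)) = (\<Sum>x\<in>V. real (card (N x \<inter> N v)))"
proof -
  have "(\<Sum>u\<in>N v. card {x\<in>V. {x,u} \<in> E}) = (\<Sum>x\<in>V. card {u\<in>N v. {x,u} \<in> E})"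
    by (rule sum_card_swap[OF finN finV])
  moreover have "\<And>u. {x\<in>V. {x,u} \<in> E} = N u" unfolding N_def by simp
  moreover have "\<And>x. {u\<in>N v. {x,u} \<in> E} = N x \<inter> N v" using N_sub unfolding N_def
    by (auto simp: insert_commute)
  ultimately have "(\<Sum>u\<in>N v. d u) = (\<Sum>x\<in>V. card (N x \<inter> N v))" by simp
  then show ?thesis by (metis of_nat_sum)
qed

end


lemma arith1: "(a::real) \<le> c + t + 1 \<Longrightarrow> k/4 \<le> a \<Longrightarrow> 8*(t+2) \<le> k \<Longrightarrow> k/8 \<le> c" by (simp add: field_simps)

context gr begin

lemma greedy:
  assumes k: "card V = k" and CV: "C \<subseteq> V" and degC: "\<forall>y\<in>C. real (d y) \<ge> real k / 4"
    and X0: "finite X0" "card X0 \<le> 2" and it: "i \<le> t" and kbig: "real k \<ge> 8 * (real t + 2)"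
  shows "\<exists>Z Ci. Z \<subseteq> V \<and> card Z = i \<and> Z \<inter> X0 = {} \<and> Ci \<subseteq> C \<and>
            real (card Ci) \<ge> real (card C) / 8 ^ i \<and> (\<forall>z\<in>Z. \<forall>y\<in>Ci. {z,y} \<in> E)"
  using it
proof (induction i)
  case 0
  show ?case by (rule exI[of _ "{}"], rule exI[of _ C]) auto
next
  case (Suc i)
  then obtain Z Ci where Z: "Z \<subseteq> V" "card Z = i" "Z \<inter> X0 = {}" and Ci: "Ci \<subseteq> C"
    "real (card Ci) \<ge> real (card C) / 8 ^ i" and comp: "\<forall>z\<in>Z. \<forall>y\<in>Ci. {z,y} \<in> E" by auto
  have finZ: "finite Z" using finite_subset[OF Z(1) finV] .
  define Ex where "Ex = X0 \<union> Z"
  define Cand where "Cand = V - Ex"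
  have finEx: "finite Ex" using finZ X0 Ex_def by simp
  have cEx: "card Ex \<le> t + 1" using card_Un_le[of X0 Z] Z(2) X0(2) Suc.prems Ex_def by simp
  have finCand: "finite Cand" using finV Cand_def by simp
  have finCi: "finite Ci" using finite_subset[OF subset_trans[OF Ci(1) CV] finV] .
  have cCand: "card Cand \<le> k" using card_mono[OF finV Diff_subset, of Ex] k unfolding Cand_def by simp
  have cCand2: "card Cand \<ge> k - (t+1)" using diff_card_le_card_Diff[OF finEx, of V] cEx k unfolding Cand_def by linarith
  have "real (t + 1) < real k" using kbig by simp
  then have kt: "k > t + 1" by (simp only: of_nat_less_iff)
  have Cne: "Cand \<noteq> {}" using cCand2 kt by auto
  have sumeq: "(\<Sum>z\<in>Cand. card {y\<in>Ci. {y,z} \<in> E}) = (\<Sum>y\<in>Ci. card {z\<in>Cand. {y,z} \<in> E})"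
    by (rule sum_card_swap[OF finCand finCi])
  have each: "real (card {z\<in>Cand. {y,z} \<in> E}) \<ge> real k / 8" if y: "y \<in> Ci" for y
  proof -
    have "N y - Ex \<subseteq> {z\<in>Cand. {y,z} \<in> E}" unfolding Cand_def N_def by (auto simp: insert_commute)
    then have "card (N y - Ex) \<le> card {z\<in>Cand. {y,z} \<in> E}" using finCand by (simp add: card_mono)
    moreover have "d y - card Ex \<le> card (N y - Ex)" using diff_card_le_card_Diff[OF finEx] by blast
    moreover have "real (d y) \<ge> real k / 4" using degC y Ci(1) by auto
    ultimately have "d y \<le> card {z\<in>Cand. {y,z} \<in> E} + (t + 1)" using cEx by linarith
    then have f1: "real (d y) \<le> real (card {z\<in>Cand. {y,z} \<in> E}) + real t + 1" by linarith
    have f2: "real (d y) \<ge> real k / 4" using degC y Ci(1) by auto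
    show ?thesis using arith1[OF f1 f2 kbig] .
  qed
  have "(\<Sum>y\<in>Ci. real k / 8) \<le> (\<Sum>y\<in>Ci. real (card {z\<in>Cand. {y,z} \<in> E}))"
    by (rule sum_mono) (use each in auto)
  also have "\<dots> = (\<Sum>z\<in>Cand. real (card {y\<in>Ci. {y,z} \<in> E}))"
    unfolding of_nat_sum[symmetric] using sumeq by simp
  finally have big: "real (card Ci) * real k / 8 \<le> (\<Sum>z\<in>Cand. real (card {y\<in>Ci. {y,z} \<in> E}))"
    by simp
  have "\<exists>z\<in>Cand. real (card {y\<in>Ci. {y,z} \<in> E}) \<ge> real (card Ci) / 8"
  proof (rule ccontr)
    assume "\<not> ?thesis"
    then have lt: "\<forall>z\<in>Cand. real (card {y\<in>Ci. {y,z} \<in> E}) < real (card Ci) / 8" by auto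
    have "(\<Sum>z\<in>Cand. real (card {y\<in>Ci. {y,z} \<in> E})) < (\<Sum>z\<in>Cand. real (card Ci) / 8)"
      by (rule sum_strict_mono[OF finCand Cne]) (use lt in blast)
    also have "\<dots> = real (card Cand) * real (card Ci) / 8" by simp
    also have "\<dots> \<le> real k * real (card Ci) / 8"
      using cCand by (simp add: divide_right_mono mult_right_mono)
    finally show False using big by (simp add: mult.commute)
  qed
  then obtain z where z: "z \<in> Cand" and zc: "real (card {y\<in>Ci. {y,z} \<in> E}) \<ge> real (card Ci) / 8" by blast
  define C' where "C' = {y\<in>Ci. {y,z} \<in> E}"
  have zV: "z \<in> V" and zZ: "z \<notin> Z" and zX: "z \<notin> X0" using z Cand_def Ex_def by auto
  show ?case
  proof (intro exI conjI)
    show "insert z Z \<subseteq> V" using zV Z(1) by auto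
    show "card (insert z Z) = Suc i" using finZ zZ Z(2) by simp
    show "insert z Z \<inter> X0 = {}" using zX Z(3) by auto
    show "C' \<subseteq> C" using Ci(1) C'_def by auto
    have "real (card C) / 8 ^ Suc i = (real (card C) / 8 ^ i) / 8" by simp
    also have "\<dots> \<le> real (card Ci) / 8" using Ci(2) by (simp add: divide_right_mono)
    also have "\<dots> \<le> real (card C')" using zc C'_def by simp
    finally show "real (card C) / 8 ^ Suc i \<le> real (card C')" .
    show "\<forall>za\<in>insert z Z. \<forall>y\<in>C'. {za, y} \<in> E" using comp C'_def by (auto simp: insert_commute)
  qed
qed

lemma codeg:
  assumes k: "card V = k" and deg: "\<forall>y\<in>V. real (d y) \<ge> real k / 4" and hf: "hfree t"
    and kbig: "real k \<ge> 8 * (real t + 2)" "real k \<ge> 20 * real t * 8 ^ t" and e: "{u,v} \<in> E"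
  shows "real (card (N u \<inter> N v)) \<le> real k / 20"
proof (rule ccontr)
  assume a: "\<not> ?thesis"
  let ?C = "N u \<inter> N v"
  have CV: "?C \<subseteq> V" using N_sub by auto
  obtain Z Ci where Z: "Z \<subseteq> V" "card Z = t" "Z \<inter> {u,v} = {}" and Ci: "Ci \<subseteq> ?C"
    "real (card Ci) \<ge> real (card ?C) / 8 ^ t" and comp: "\<forall>z\<in>Z. \<forall>y\<in>Ci. {z,y} \<in> E"
  proof -
    have "card {u,v} \<le> 2" by (simp add: card_insert_if)
    moreover have "\<forall>y\<in>?C. real (d y) \<ge> real k / 4" using deg CV by blast
    ultimately obtain Z Ci where "Z \<subseteq> V \<and> card Z = t \<and> Z \<inter> {u,v} = {} \<and> Ci \<subseteq> ?C \<and>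
            real (card Ci) \<ge> real (card ?C) / 8 ^ t \<and> (\<forall>z\<in>Z. \<forall>y\<in>Ci. {z,y} \<in> E)"
      using greedy[OF k CV _ _ _ order_refl kbig(1), of "{u,v}"] by blast
    then show ?thesis using that by blast
  qed
  have "real k / 20 \<le> real (card ?C)" using a by linarith
  then have "real (card ?C) / 8 ^ t \<ge> real k / 20 / 8 ^ t"
    by (intro divide_right_mono) auto
  moreover have "real k / 20 / 8 ^ t \<ge> real t"
    using kbig(2) by (simp add: field_simps)
  ultimately have "real (card Ci) \<ge> real t" using Ci(2) by linarith
  then have "t \<le> card Ci" by simp
  then obtain Y where Y: "Y \<subseteq> Ci" "card Y = t" by (meson obtain_subset_with_card_n)
  have ZY: "Z \<inter> Y = {}"
  proof (rule ccontr)
    assume "Z \<inter> Y \<noteq> {}"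
    then obtain z where "z \<in> Z" "z \<in> Y" by blast
    then have "{z,z} \<in> E" using comp Y(1) by blast
    then show False using edge[of z z] by simp
  qed
  have "\<exists>u v Y Z. {u,v} \<in> E \<and> Y \<subseteq> N u \<inter> N v \<and> card Y = t \<and> Z \<subseteq> V \<and> card Z = t
      \<and> Z \<inter> Y = {} \<and> u \<notin> Z \<and> v \<notin> Z \<and> (\<forall>z\<in>Z. \<forall>y\<in>Y. {z,y} \<in> E)"
    using e Y Ci(1) Z ZY comp by (intro exI[of _ u] exI[of _ v] exI[of _ Y] exI[of _ Z]) auto
  then show False using hf unfolding hfree_def by blast
qed

end



lemma cs_ineq:
  fixes f :: "'a \<Rightarrow> real"
  assumes fin: "finite A"
  shows "(\<Sum>a\<in>A. f a) * (\<Sum>a\<in>A. f a) \<le> real (card A) * (\<Sum>a\<in>A. f a * f a)"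
proof -
  define n where "n = real (card A)"
  define s where "s = (\<Sum>a\<in>A. f a)"
  define q where "q = (\<Sum>a\<in>A. f a * f a)"
  have "0 \<le> (\<Sum>a\<in>A. (n * f a - s) * (n * f a - s))" by (intro sum_nonneg) auto
  also have "(\<Sum>a\<in>A. (n * f a - s) * (n * f a - s)) = (\<Sum>a\<in>A. n*n*(f a * f a) - 2*n*s*f a + s*s)"
    by (intro sum.cong) (auto simp: algebra_simps)
  also have "\<dots> = (\<Sum>a\<in>A. n*n*(f a * f a)) - (\<Sum>a\<in>A. 2*n*s*f a) + (\<Sum>a\<in>A. s*s)"
    by (simp add: sum.distrib sum_subtractf)
  also have "(\<Sum>a\<in>A. n*n*(f a * f a)) = n*n*q" unfolding q_def by (simp add: sum_distrib_left)
  also have "(\<Sum>a\<in>A. 2*n*s*f a) = 2*n*s*s" by (simp add: sum_distrib_left[symmetric] s_def[symmetric])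
  also have "(\<Sum>a\<in>A. s*s) = n*(s*s)" unfolding n_def by simp
  finally have 1: "0 \<le> n * (n*q - s*s)" by (simp add: algebra_simps)
  show ?thesis
  proof (cases "card A = 0")
    case True
    then have "A = {}" using fin by simp
    then show ?thesis by simp
  next
    case False
    then have "n > 0" unfolding n_def by simp
    then have "0 \<le> n*q - s*s" using 1 by (simp add: zero_le_mult_iff)
    then show ?thesis unfolding n_def s_def q_def by simp
  qed
qed

lemma nat_half_bound:
  fixes s k :: nat
  assumes "real s \<le> real k * real k / 2"
  shows "s \<le> 2 * (k div 2) * ((k+1) div 2)"
proof (cases "even k")
  case True
  then obtain m where k: "k = 2*m" by (auto elim: evenE)
  then have "real s \<le> real (2*m*m)" using assms by simp
  then have "s \<le> 2*m*m" by (simp only: of_nat_le_iff)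
  then show ?thesis using k by simp
next
  case False
  then obtain m where k: "k = 2*m+1" by (auto elim: oddE)
  then have "real s \<le> 2*real m*real m + 2*real m + 1/2" using assms by (simp add: algebra_simps)
  then have "real s < real (2*m*m + 2*m + 1)" by simp
  then have "s < 2*m*m + 2*m + 1" by (simp only: of_nat_less_iff)
  moreover have "(k+1) div 2 = m+1" "k div 2 = m" using k by auto
  ultimately show ?thesis by (simp add: algebra_simps)
qed

definition B :: "nat \<Rightarrow> real" where
  "B k = (real k - 2) * real (k div 2) * real ((k+1) div 2)"

lemma arith2:
  fixes x k w :: real
  assumes "0 \<le> x" "x < k/4" "12 \<le> k" "w \<le> x*x + 2*(x*k)" "w > 3*(k*k)/4 - 2*k - 1"
  shows False
proof -
  have a: "x*x \<le> (k/4)*(k/4)" using assms by (intro mult_mono) auto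
  have b: "x*k \<le> (k/4)*k" using assms by (intro mult_right_mono) auto
  have c: "12*k \<le> k*k" using assms by (intro mult_right_mono) auto
  show False using a b c assms(3,4,5) by (simp add: field_simps)
qed

lemma arith3:
  fixes x k w :: real
  assumes "0 \<le> x" "x \<le> 2*k/5" "30 \<le> k" "10*w \<le> 21*(k*x) - 10*(x*x)" "w > 3*(k*k)/4 - 2*k - 1"
  shows False
proof -
  have "0 \<le> (2*k - 5*x)*(17*k - 10*x)" using assms by (intro mult_nonneg_nonneg) auto
  also have "(2*k - 5*x)*(17*k - 10*x) = 34*(k*k) - 105*(k*x) + 50*(x*x)" by (simp add: algebra_simps)
  finally have a: "0 \<le> 34*(k*k) - 105*(k*x) + 50*(x*x)" .
  have c: "30*k \<le> k*k" using assms by (intro mult_right_mono) auto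
  show False using a c assms(2,3,4,5) by (simp add: field_simps)
qed

context gr begin

lemma mindeg1:
  assumes k: "card V = k" and kb: "real k \<ge> 12"
    and Wb: "\<forall>x\<in>V. W x > 3*(real k*real k)/4 - 2*real k - 1"
  shows "\<forall>v\<in>V. real (d v) \<ge> real k / 4"
proof
  fix v assume v: "v \<in> V"
  have s: "(\<Sum>u\<in>N v. real (d u) - 1) \<le> real (d v) * real k"
  proof -
    have "(\<Sum>u\<in>N v. real (d u) - 1) \<le> of_nat (card (N v)) * real k"
    proof (rule sum_bounded_above)
      fix u assume "u \<in> N v"
      have "d u \<le> k" using d_le k by simp
      then show "real (d u) - 1 \<le> real k" by simp
    qed
    then show ?thesis by simp
  qed
  have "W v \<le> real (d v) * real (d v) + 2 * (real (d v) * real k)"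
    unfolding W_def using s by (simp add: algebra_simps)
  show "real (d v) \<ge> real k / 4"
  proof (rule ccontr)
    assume "\<not> ?thesis"
    then have "real (d v) < real k / 4" by simp
    then show False using arith2[of "real (d v)" "real k" "W v"] \<open>W v \<le> _\<close> Wb v kb by auto
  qed
qed

lemma mindeg2:
  assumes k: "card V = k" and kb: "real k \<ge> 30"
    and Wb: "\<forall>x\<in>V. W x > 3*(real k*real k)/4 - 2*real k - 1"
    and cd: "\<And>u v. {u,v} \<in> E \<Longrightarrow> real (card (N u \<inter> N v)) \<le> real k / 20"
  shows "\<forall>v\<in>V. real (d v) > 2 * real k / 5"
proof
  fix v assume v: "v \<in> V"
  have NV: "N v \<subseteq> V" by (rule N_sub)
  have s1: "(\<Sum>x\<in>N v. real (card (N x \<inter> N v))) \<le> real (d v) * (real k / 20)"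
  proof -
    have "(\<Sum>x\<in>N v. real (card (N x \<inter> N v))) \<le> of_nat (card (N v)) * (real k / 20)"
      by (rule sum_bounded_above) (use cd N_iff in auto)
    then show ?thesis by simp
  qed
  have cdiff: "card (V - N v) = k - d v" using card_Diff_subset[OF finN NV] k by simp
  have dk: "d v \<le> k" using d_le k by simp
  have s2: "(\<Sum>x\<in>V - N v. real (card (N x \<inter> N v))) \<le> (real k - real (d v)) * real (d v)"
  proof -
    have "(\<Sum>x\<in>V - N v. real (card (N x \<inter> N v))) \<le> of_nat (card (V - N v)) * real (d v)"
      by (rule sum_bounded_above) (simp add: card_mono finN)
    then show ?thesis using cdiff dk by (simp add: of_nat_diff)
  qed
  have split: "(\<Sum>x\<in>V. real (card (N x \<inter> N v))) = (\<Sum>x\<in>V - N v. real (card (N x \<inter> N v))) + (\<Sum>x\<in>N v. real (card (N x \<inter> N v)))"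
    by (rule sum.subset_diff[OF NV finV])
  have s3: "(\<Sum>u\<in>N v. real (d u) - 1) \<le> (\<Sum>u\<in>N v. real (d u))"
    by (rule sum_mono) auto
  have "W v \<le> real (d v) * real (d v) + 2 * (\<Sum>u\<in>N v. real (d u))"
    unfolding W_def using s3 by (simp add: algebra_simps)
  also have "(\<Sum>u\<in>N v. real (d u)) \<le> real (d v) * (real k / 20) + (real k - real (d v)) * real (d v)"
    using sum_d_nb[of v] split s1 s2 by linarith
  finally have Wv: "W v \<le> real (d v) * real (d v) + 2 * (real (d v) * (real k / 20) + (real k - real (d v)) * real (d v))"
    by simp
  then have Wv2: "10 * W v \<le> 21 * (real k * real (d v)) - 10 * (real (d v) * real (d v))"
    by (simp add: algebra_simps)
  show "real (d v) > 2 * real k / 5"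
  proof (rule ccontr)
    assume "\<not> ?thesis"
    then have "real (d v) \<le> 2 * real k / 5" by simp
    then show False using arith3[of "real (d v)" "real k" "W v"] Wv2 Wb v kb by auto
  qed
qed

lemma no_triangle:
  assumes k: "card V = k"
    and deg: "\<forall>v\<in>V. real (d v) > 2 * real k / 5"
    and cd: "\<And>u v. {u,v} \<in> E \<Longrightarrow> real (card (N u \<inter> N v)) \<le> real k / 20"
    and e: "{u,v} \<in> E" "{v,w} \<in> E" "{u,w} \<in> E"
  shows False
proof -
  have V: "u \<in> V" "v \<in> V" "w \<in> V" using e edge by auto
  have "N u \<union> N v \<union> N w \<subseteq> V" using N_sub by auto
  then have "card (N u \<union> N v \<union> N w) \<le> k" using k card_mono[OF finV] by blast
  then have "d u + d v + d w \<le> k + card (N u \<inter> N v) + card (N v \<inter> N w) + card (N u \<inter> N w)"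
    using card3_incl_excl[OF finN finN finN, of u v w] by linarith
  then have "real (d u) + real (d v) + real (d w) \<le> real k + real (card (N u \<inter> N v)) + real (card (N v \<inter> N w)) + real (card (N u \<inter> N w))"
    by (metis of_nat_add of_nat_le_iff)
  moreover have "real (card (N u \<inter> N v)) \<le> real k / 20" "real (card (N v \<inter> N w)) \<le> real k / 20"
    "real (card (N u \<inter> N w)) \<le> real k / 20" using cd e by auto
  moreover have "real (d u) > 2 * real k / 5" "real (d v) > 2 * real k / 5" "real (d w) > 2 * real k / 5"
    using deg V by auto
  ultimately show False by (simp add: field_simps)
qed

end



lemma B_nonneg: "k \<ge> 2 \<Longrightarrow> B k \<ge> 0"
  unfolding B_def by simp

lemma B_inc: "4 * (B (Suc j) - B j) \<ge> 3 * (real (Suc j) * real (Suc j)) - 8 * real (Suc j)"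
proof (cases "even j")
  case True
  then obtain m where j: "j = 2*m" by (auto elim: evenE)
  have "B (Suc j) = (2*real m - 1) * real m * (real m + 1)"
    unfolding B_def j by simp
  moreover have "B j = (2*real m - 2) * real m * real m" unfolding B_def j by simp
  ultimately show ?thesis unfolding j apply (simp add: algebra_simps) apply (linarith?) done
next
  case False
  then obtain m where j: "j = 2*m+1" by (auto elim: oddE)
  have "Suc j = 2*(m+1)" using j by simp
  then have "B (Suc j) = (2*real m) * (real m + 1) * (real m + 1)"
    unfolding B_def by (simp add: algebra_simps)
  moreover have "B j = (2*real m - 1) * real m * (real m + 1)" unfolding B_def j by simp
  ultimately show ?thesis unfolding j apply (simp add: algebra_simps) apply (linarith?) done
qed

context gr begin

lemma Q_le: "Q \<le> real (card V) * (real (card V) * real (card V))"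
proof -
  have "Q \<le> of_nat (card V) * (real (card V) * real (card V))"
    unfolding Q_def
  proof (rule sum_bounded_above)
    fix v assume "v \<in> V"
    have "real (d v) \<le> real (card V)" using d_le by simp
    then have "real (d v) * real (d v) \<le> real (card V) * real (card V)" by (intro mult_mono) auto
    then show "real (d v) * (real (d v) - 1) \<le> real (card V) * real (card V)"
      by (simp add: algebra_simps)
  qed
  then show ?thesis by simp
qed

lemma trifree_bound:
  assumes k: "card V = k" and k2: "k \<ge> 2"
    and tf: "\<And>u v w. {u,v} \<in> E \<Longrightarrow> {v,w} \<in> E \<Longrightarrow> {u,w} \<in> E \<Longrightarrow> False"
  shows "Q \<le> B k"
proof -
  have es: "real (d u) + real (d v) \<le> real k" if uv: "u \<in> N v" for u v
  proof -
    have "N u \<inter> N v = {}"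
    proof (rule ccontr)
      assume "N u \<inter> N v \<noteq> {}"
      then obtain x where "x \<in> N u" "x \<in> N v" by blast
      then have "{x,u} \<in> E" "{x,v} \<in> E" using N_iff by auto
      moreover have "{u,v} \<in> E" using uv N_iff by auto
      ultimately show False using tf[of x u v] by blast
    qed
    then have "card (N u \<union> N v) = d u + d v" using card_Un_disjoint[OF finN finN] by blast
    moreover have "N u \<union> N v \<subseteq> V" using N_sub by auto
    ultimately have "d u + d v \<le> k" using card_mono[OF finV] k by metis
    then show ?thesis by (metis of_nat_add of_nat_le_iff)
  qed
  define S1 where "S1 = (\<Sum>v\<in>V. real (d v))"
  define S2 where "S2 = (\<Sum>v\<in>V. real (d v) * real (d v))"
  have A: "(\<Sum>v\<in>V. \<Sum>u\<in>N v. real (d u) + real (d v)) \<le> (\<Sum>v\<in>V. real (d v) * real k)"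
  proof (rule sum_mono)
    fix v assume "v \<in> V"
    have "(\<Sum>u\<in>N v. real (d u) + real (d v)) \<le> of_nat (card (N v)) * real k"
      by (rule sum_bounded_above) (use es in auto)
    then show "(\<Sum>u\<in>N v. real (d u) + real (d v)) \<le> real (d v) * real k" by simp
  qed
  have B1: "(\<Sum>v\<in>V. \<Sum>u\<in>N v. real (d u)) = S2"
  proof -
    have "(\<Sum>v\<in>V. \<Sum>u\<in>{u\<in>V. {u,v} \<in> E}. real (d u)) = (\<Sum>u\<in>V. real (d u) * real (card {v\<in>V. {u,v} \<in> E}))"
      by (rule sum_swap_weight[OF finV])
    moreover have "\<And>u. {v\<in>V. {u,v} \<in> E} = N u" unfolding N_def by (auto simp: insert_commute)
    ultimately show ?thesis unfolding S2_def N_def by simp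
  qed
  have B2: "(\<Sum>v\<in>V. \<Sum>u\<in>N v. real (d v)) = S2" unfolding S2_def by simp
  have "(\<Sum>v\<in>V. \<Sum>u\<in>N v. real (d u) + real (d v)) = (\<Sum>v\<in>V. \<Sum>u\<in>N v. real (d u)) + (\<Sum>v\<in>V. \<Sum>u\<in>N v. real (d v))"
    by (simp add: sum.distrib)
  moreover have "(\<Sum>v\<in>V. real (d v) * real k) = S1 * real k" unfolding S1_def by (simp add: sum_distrib_right)
  ultimately have two: "2 * S2 \<le> real k * S1" using A B1 B2 by (simp add: algebra_simps)
  have cs: "S1 * S1 \<le> real k * S2" using cs_ineq[OF finV, of "\<lambda>v. real (d v)"] k unfolding S1_def S2_def by simp
  have S1nn: "S1 \<ge> 0" unfolding S1_def by (simp add: sum_nonneg)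
  have S1b: "S1 \<le> real k * real k / 2"
  proof (cases "S1 = 0")
    case True then show ?thesis by simp
  next
    case False
    then have pos: "S1 > 0" using S1nn by simp
    have "S2 \<le> real k * S1 / 2" using two by simp
    then have "real k * S2 \<le> real k * (real k * S1 / 2)" by (intro mult_left_mono) auto
    then have "S1 * S1 \<le> (real k * real k / 2) * S1" using cs by (simp add: algebra_simps)
    then show ?thesis using pos by simp
  qed
  define s where "s = (\<Sum>v\<in>V. d v)"
  have S1s: "S1 = real s" unfolding S1_def s_def by simp
  have sb: "s \<le> 2 * (k div 2) * ((k+1) div 2)" using nat_half_bound[of s k] S1b S1s by simp
  have Qeq: "Q = S2 - S1" unfolding Q_def S1_def S2_def by (simp add: algebra_simps sum_subtractf)
  have "Q \<le> (real k - 2) / 2 * S1" using Qeq two by (simp add: field_simps)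
  also have "\<dots> \<le> (real k - 2) / 2 * real (2 * (k div 2) * ((k+1) div 2))"
  proof (intro mult_left_mono)
    have "real s \<le> real (2 * (k div 2) * ((k+1) div 2))" using sb by (simp only: of_nat_le_iff)
    then show "S1 \<le> real (2 * (k div 2) * ((k+1) div 2))" using S1s by simp
    show "0 \<le> (real k - 2) / 2" using k2 by simp
  qed
  also have "\<dots> = B k" unfolding B_def by simp
  finally show ?thesis .
qed

lemma terminal:
  assumes k: "card V = k" and hf: "hfree t"
    and kb: "real k \<ge> 30" "real k \<ge> 8 * (real t + 2)" "real k \<ge> 20 * real t * 8 ^ t"
    and Wb: "\<forall>x\<in>V. W x > 3*(real k*real k)/4 - 2*real k - 1"
  shows "Q \<le> B k"
proof -
  have d1: "\<forall>v\<in>V. real (d v) \<ge> real k / 4" using mindeg1[OF k _ Wb] kb by simp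
  have cd: "\<And>u v. {u,v} \<in> E \<Longrightarrow> real (card (N u \<inter> N v)) \<le> real k / 20"
    using codeg[OF k d1 hf kb(2) kb(3)] by blast
  have d2: "\<forall>v\<in>V. real (d v) > 2 * real k / 5" using mindeg2[OF k kb(1) Wb cd] by blast
  show ?thesis
  proof (rule trifree_bound[OF k])
    show "k \<ge> 2" using kb by simp
    show "\<And>u v w. {u,v} \<in> E \<Longrightarrow> {v,w} \<in> E \<Longrightarrow> {u,w} \<in> E \<Longrightarrow> False"
      using no_triangle[OF k d2 cd] by blast
  qed
qed

lemma del_gr: "gr (V - {x}) {e\<in>E. x \<notin> e}"
proof
  show "wf_graph (V - {x}, {e\<in>E. x \<notin> e})"
    unfolding wf_graph_def
  proof (intro conjI)
    show "finite (fst (V - {x}, {e \<in> E. x \<notin> e}))" using finV by simp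
    show "snd (V - {x}, {e \<in> E. x \<notin> e}) \<subseteq> {{u, v} |u v. u \<in> fst (V - {x}, {e \<in> E. x \<notin> e}) \<and> v \<in> fst (V - {x}, {e \<in> E. x \<notin> e}) \<and> u \<noteq> v}"
    proof
      fix e assume "e \<in> snd (V - {x}, {e \<in> E. x \<notin> e})"
      then have e: "e \<in> E" "x \<notin> e" by auto
      have "e \<in> {{u,v}|u v. u \<in> V \<and> v \<in> V \<and> u \<noteq> v}" using wf e(1) unfolding wf_graph_def by auto
      then obtain u v where "e = {u,v}" "u \<in> V" "v \<in> V" "u \<noteq> v" by blast
      then show "e \<in> {{u, v} |u v. u \<in> fst (V - {x}, {e \<in> E. x \<notin> e}) \<and> v \<in> fst (V - {x}, {e \<in> E. x \<notin> e}) \<and> u \<noteq> v}"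
        using e(2) by auto
    qed
  qed
qed

lemma del_N: "v \<noteq> x \<Longrightarrow> gr.N (V - {x}) {e\<in>E. x \<notin> e} v = N v - {x}"
  unfolding gr.N_def[OF del_gr] N_def by auto

lemma del_Q:
  assumes x: "x \<in> V"
  shows "gr.Q (V - {x}) {e\<in>E. x \<notin> e} = Q - W x"
proof -
  interpret G: gr "V - {x}" "{e\<in>E. x \<notin> e}" by (rule del_gr)
  have trm: "real (G.d v) * (real (G.d v) - 1) = real (d v) * (real (d v) - 1) - (if v \<in> N x then 2 * (real (d v) - 1) else 0)"
    if v: "v \<in> V - {x}" for v
  proof (cases "v \<in> N x")
    case True
    then have "x \<in> N v" using N_sym[of v x] by blast
    then have "G.d v = d v - 1" "d v \<ge> 1" using del_N[of v] v finN card_Diff_singleton[OF \<open>x \<in> N v\<close>]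
      by (auto simp: Suc_le_eq card_gt_0_iff)
    then show ?thesis using True by (simp add: of_nat_diff algebra_simps)
  next
    case False
    then have "x \<notin> N v" using N_sym[of v x] by blast
    then have "G.d v = d v" using del_N[of v] v by simp
    then show ?thesis using False by simp
  qed
  have "G.Q = (\<Sum>v\<in>V - {x}. real (d v) * (real (d v) - 1) - (if v \<in> N x then 2 * (real (d v) - 1) else 0))"
    unfolding G.Q_def by (rule sum.cong) (use trm in auto)
  also have "\<dots> = (\<Sum>v\<in>V - {x}. real (d v) * (real (d v) - 1)) - (\<Sum>v\<in>V - {x}. (if v \<in> N x then 2 * (real (d v) - 1) else 0))"
    by (simp add: sum_subtractf)
  also have "(\<Sum>v\<in>V - {x}. (if v \<in> N x then 2 * (real (d v) - 1) else 0)) = (\<Sum>v\<in>{v\<in>V - {x}. v \<in> N x}. 2 * (real (d v) - 1))"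
    by (rule sum.inter_filter[symmetric]) (simp add: finV)
  also have "{v\<in>V - {x}. v \<in> N x} = N x" using N_sub N_irr by auto
  also have "(\<Sum>v\<in>V - {x}. real (d v) * (real (d v) - 1)) = Q - real (d x) * (real (d x) - 1)"
    unfolding Q_def using sum.remove[OF finV x, of "\<lambda>v. real (d v) * (real (d v) - 1)"] by simp
  finally show ?thesis unfolding W_def by (simp add: sum_distrib_left)
qed

lemma del_hfree:
  assumes hf: "hfree t"
  shows "gr.hfree (V - {x}) {e\<in>E. x \<notin> e} t"
proof -
  interpret G: gr "V - {x}" "{e\<in>E. x \<notin> e}" by (rule del_gr)
  have NN: "\<And>v. G.N v \<subseteq> N v" unfolding G.N_def N_def by auto
  show ?thesis unfolding G.hfree_def
  proof
    assume "\<exists>u v Y Z. {u,v} \<in> {e\<in>E. x \<notin> e} \<and> Y \<subseteq> G.N u \<inter> G.N v \<and> card Y = t \<and> Z \<subseteq> V - {x} \<and> card Z = t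
      \<and> Z \<inter> Y = {} \<and> u \<notin> Z \<and> v \<notin> Z \<and> (\<forall>z\<in>Z. \<forall>y\<in>Y. {z,y} \<in> {e\<in>E. x \<notin> e})"
    then obtain u v Y Z where h: "{u,v} \<in> E" "Y \<subseteq> G.N u \<inter> G.N v" "card Y = t" "Z \<subseteq> V - {x}" "card Z = t"
      "Z \<inter> Y = {}" "u \<notin> Z" "v \<notin> Z" "\<forall>z\<in>Z. \<forall>y\<in>Y. {z,y} \<in> E" by blast
    have "Y \<subseteq> N u \<inter> N v" using h(2) NN by blast
    moreover have "Z \<subseteq> V" using h(4) by blast
    ultimately show False using hf h unfolding hfree_def by blast
  qed
qed

end

lemma descent:
  fixes t K0 :: nat and V :: "'a set" and E :: "'a set set"
  assumes K0: "real K0 \<ge> 30" "real K0 \<ge> 8 * (real t + 2)" "real K0 \<ge> 20 * real t * 8 ^ t"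
  shows "s \<ge> 0 \<Longrightarrow> gr V E \<Longrightarrow> card V = K0 + j \<Longrightarrow> gr.hfree V E t \<Longrightarrow> gr.Q V E > B (K0 + j) + s \<Longrightarrow>
    \<exists>V' E'. gr V' (E' :: 'a set set) \<and> card V' = K0 \<and> gr.Q V' E' > B K0 + s + real j"
proof (induction j arbitrary: V E s)
  case 0
  then have "gr V E \<and> card V = K0 \<and> B K0 + s + real 0 < gr.Q V E" by simp
  then show ?case by blast
next
  case (Suc j)
  interpret G: gr V E by (rule Suc.prems(2))
  define k where "k = K0 + Suc j"
  have kb: "real k \<ge> 30" "real k \<ge> 8 * (real t + 2)" "real k \<ge> 20 * real t * 8 ^ t"
    using K0 unfolding k_def by auto
  have ck: "card V = k" using Suc.prems(3) k_def by simp
  have "\<not> (\<forall>x\<in>V. G.W x > 3*(real k*real k)/4 - 2*real k - 1)"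
  proof
    assume "\<forall>x\<in>V. G.W x > 3*(real k*real k)/4 - 2*real k - 1"
    then have "G.Q \<le> B k" using G.terminal[OF ck Suc.prems(4) kb] by blast
    then show False using Suc.prems(5) Suc.prems(1) k_def by simp
  qed
  then obtain x where x: "x \<in> V" and Wx: "G.W x \<le> 3*(real k*real k)/4 - 2*real k - 1" by force
  have inc0: "4 * (B k - B (K0 + j)) \<ge> 3 * (real k * real k) - 8 * real k"
    using B_inc[of "K0 + j"] unfolding k_def by simp
  have inc: "B k - B (K0 + j) \<ge> 3 * (real k * real k) / 4 - 2 * real k"
    using inc0 by (simp add: field_simps)
  have Qd: "gr.Q (V - {x}) {e\<in>E. x \<notin> e} = G.Q - G.W x" by (rule G.del_Q[OF x])
  have gt: "gr.Q (V - {x}) {e\<in>E. x \<notin> e} > B (K0 + j) + (s + 1)"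
    using Qd Wx inc Suc.prems(5) unfolding k_def by simp
  have cd: "card (V - {x}) = K0 + j" using Suc.prems(3) x G.finV by simp
  obtain V' E' where "gr V' (E' :: 'a set set)" "card V' = K0" "gr.Q V' E' > B K0 + (s + 1) + real j"
    using Suc.IH[OF _ G.del_gr cd G.del_hfree[OF Suc.prems(4)] gt] Suc.prems(1) by auto
  then show ?case by (intro exI[of _ V'] exI[of _ E']) auto
qed

theorem core:
  fixes t :: nat
  shows "\<exists>N0. \<forall>(V :: 'a set) E. gr V E \<longrightarrow> gr.hfree V E t \<longrightarrow> card V \<ge> N0 \<longrightarrow> gr.Q V E \<le> B (card V)"
proof -
  define K0 :: nat where "K0 = 30 + 8 * (t + 2) + 20 * t * 8 ^ t"
  have K0: "real K0 \<ge> 30" "real K0 \<ge> 8 * (real t + 2)" "real K0 \<ge> 20 * real t * 8 ^ t"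
    unfolding K0_def by auto
  show ?thesis
  proof (intro exI allI impI)
    fix V :: "'a set" and E
    assume g: "gr V E" and hf: "gr.hfree V E t" and n: "card V \<ge> K0 + K0 * K0 * K0"
    show "gr.Q V E \<le> B (card V)"
    proof (rule ccontr)
      assume "\<not> ?thesis"
      then have gt: "gr.Q V E > B (K0 + (card V - K0)) + 0" using n by simp
      obtain V' E' where g': "gr V' (E' :: 'a set set)" and c': "card V' = K0"
        and q': "gr.Q V' E' > B K0 + 0 + real (card V - K0)"
        using descent[OF K0 _ g _ hf gt] n by auto
      have "gr.Q V' E' \<le> real K0 * (real K0 * real K0)" using gr.Q_le[OF g'] c' by simp
      moreover have "B K0 \<ge> 0" using B_nonneg K0_def by simp
      moreover have "real (card V - K0) \<ge> real K0 * (real K0 * real K0)" using n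
        by (metis le_diff_conv2 add_leD1 add.commute of_nat_le_iff of_nat_mult mult.assoc le_add2 le_trans)
      ultimately show False using q' by linarith
    qed
  qed
qed




context gr begin

definition mkP :: "'a \<times> 'a set \<Rightarrow> 'a graph" where
  "mkP p = (insert (fst p) (snd p), (\<lambda>a. {fst p, a}) ` snd p)"

lemma mkP_copy:
  assumes c: "c \<in> V" and A: "A \<subseteq> N c" "card A = 2"
  shows "mkP (c, A) \<in> {S \<in> subgraphs (V,E). graph_iso S P3}"
proof -
  obtain x y where xy: "A = {x,y}" "x \<noteq> y" using A(2) card_2_iff by metis
  have x: "x \<in> N c" and y: "y \<in> N c" using A(1) xy by auto
  have cx: "c \<noteq> x" "c \<noteq> y" using x y N_irr by auto
  have ex: "{c,x} \<in> E" "{c,y} \<in> E" using x y N_iff by (auto simp: insert_commute)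
  have xV: "x \<in> V" "y \<in> V" using x y N_sub by auto
  have S: "mkP (c, A) = ({c,x,y}, {{c,x},{c,y}})" unfolding mkP_def xy by auto
  define f where "f = (\<lambda>v. if v = c then (1::nat) else if v = x then 0 else 2)"
  have wf: "wf_graph ({c,x,y}, {{c,x},{c,y}})"
    unfolding wf_graph_def using cx by auto
  have sub: "({c,x,y}, {{c,x},{c,y}}) \<in> subgraphs (V,E)"
    unfolding subgraphs_def using wf c xV ex by auto
  have bij: "bij_betw f {c,x,y} {0,1,2}"
    unfolding bij_betw_def inj_on_def f_def using cx xy(2) by auto
  have edges: "\<forall>u\<in>{c,x,y}. \<forall>v\<in>{c,x,y}. {u,v} \<in> {{c,x},{c,y}} \<longleftrightarrow> {f u, f v} \<in> {{0,1},{1,2}}"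
    unfolding f_def using cx xy(2) by (auto simp: doubleton_eq_iff)
  have "graph_iso ({c,x,y}, {{c,x},{c,y}}) P3"
    unfolding graph_iso_def P3_def using bij edges by (intro exI[of _ f]) auto
  then show ?thesis using S sub by auto
qed

lemma copy_mkP:
  assumes S: "S \<in> subgraphs (V,E)" "graph_iso S P3"
  shows "\<exists>c A. c \<in> V \<and> A \<subseteq> N c \<and> card A = 2 \<and> S = mkP (c, A)"
proof -
  obtain VS ES where SS: "S = (VS, ES)" by (cases S)
  have wfS: "wf_graph (VS, ES)" and VSV: "VS \<subseteq> V" and ESE: "ES \<subseteq> E"
    using S(1) SS unfolding subgraphs_def by auto
  obtain f where bij: "bij_betw f VS {0,1,2}"
    and ed: "\<forall>u\<in>VS. \<forall>v\<in>VS. {u,v} \<in> ES \<longleftrightarrow> {f u, f v} \<in> {{0::nat,1},{1,2}}"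
    using S(2) SS unfolding graph_iso_def P3_def by auto
  define h where "h = inv_into VS f"
  define x where "x = h 0"
  define c where "c = h 1"
  define y where "y = h 2"
  have surj: "f ` VS = {0,1,2}" using bij by (simp add: bij_betw_def)
  have hin: "h i \<in> VS \<and> f (h i) = i" if i: "i \<in> {0::nat,1,2}" for i
  proof
    have "i \<in> f ` VS" using surj i by simp
    then show "h i \<in> VS" "f (h i) = i" unfolding h_def by (simp_all add: inv_into_into f_inv_into_f)
  qed
  have VSin: "x \<in> VS" "c \<in> VS" "y \<in> VS" and fv: "f x = 0" "f c = 1" "f y = 2"
    using hin unfolding x_def c_def y_def by auto
  have hf: "\<And>v. v \<in> VS \<Longrightarrow> h (f v) = v" unfolding h_def using bij
    by (simp add: bij_betw_imp_inj_on inv_into_f_f)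
  have fVS: "\<And>v. v \<in> VS \<Longrightarrow> f v \<in> {0,1,2}" using bij bij_betwE by blast
  have VS3: "VS = {x,c,y}"
  proof
    show "VS \<subseteq> {x,c,y}"
    proof
      fix v assume v: "v \<in> VS"
      then have "f v = 0 \<or> f v = 1 \<or> f v = 2" using fVS by auto
      then show "v \<in> {x,c,y}" using hf[OF v] unfolding x_def c_def y_def by auto
    qed
    show "{x,c,y} \<subseteq> VS" using VSin by auto
  qed
  have dist: "x \<noteq> c" "c \<noteq> y" "x \<noteq> y" using fv by auto
  have ES2: "ES = {{c,x},{c,y}}"
  proof
    show "ES \<subseteq> {{c,x},{c,y}}"
    proof
      fix e assume e: "e \<in> ES"
      then obtain p q where pq: "e = {p,q}" "p \<in> VS" "q \<in> VS" "p \<noteq> q"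
        using wfS unfolding wf_graph_def by auto
      then have "{f p, f q} \<in> {{0::nat,1},{1,2}}" using ed e by auto
      moreover have "p \<in> {x,c,y}" "q \<in> {x,c,y}" using pq VS3 by auto
      ultimately show "e \<in> {{c,x},{c,y}}" using pq(1,4) fv by (auto simp: doubleton_eq_iff)
    qed
    have "{c,x} \<in> ES" using ed VSin fv by (auto simp: insert_commute)
    moreover have "{c,y} \<in> ES" using ed VSin fv by auto
    ultimately show "{{c,x},{c,y}} \<subseteq> ES" by auto
  qed
  have "{c,x} \<in> E" "{c,y} \<in> E" using ES2 ESE by auto
  then have xN: "x \<in> N c" "y \<in> N c" using N_iff by (auto simp: insert_commute)
  show ?thesis
  proof (intro exI conjI)
    show "c \<in> V" using VSin VSV by auto
    show "{x,y} \<subseteq> N c" using xN by auto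
    show "card {x,y} = 2" using dist by auto
    show "S = mkP (c, {x,y})" unfolding SS mkP_def using VS3 ES2 by auto
  qed
qed

lemma mkP_inj: "inj_on mkP (SIGMA c:V. {A. A \<subseteq> N c \<and> card A = 2})"
proof (rule inj_onI)
  fix p q assume p: "p \<in> (SIGMA c:V. {A. A \<subseteq> N c \<and> card A = 2})"
    and q: "q \<in> (SIGMA c:V. {A. A \<subseteq> N c \<and> card A = 2})" and eq: "mkP p = mkP q"
  obtain c A where pc: "p = (c, A)" by (cases p)
  obtain c' A' where qc: "q = (c', A')" by (cases q)
  have A: "card A = 2" using p pc by auto
  obtain x y where xy: "A = {x,y}" "x \<noteq> y" using A card_2_iff by metis
  have Eeq: "(\<lambda>a. {c,a}) ` A = (\<lambda>a. {c',a}) ` A'" using eq unfolding pc qc mkP_def by simp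
  have cc: "c = c'"
  proof (rule ccontr)
    assume ne: "c \<noteq> c'"
    have "c' \<in> {c,z}" if z: "z \<in> A" for z
    proof -
      have "{c,z} \<in> (\<lambda>a. {c,a}) ` A" using z by (rule imageI)
      then have "{c,z} \<in> (\<lambda>a. {c',a}) ` A'" using Eeq by simp
      then obtain a' where "{c,z} = {c',a'}" by blast
      then show ?thesis by (metis insertI1)
    qed
    then have "c' \<in> {c,x}" "c' \<in> {c,y}" using xy by auto
    then show False using ne xy(2) by auto
  qed
  have "(\<lambda>a. {c,a}) ` A = (\<lambda>a. {c,a}) ` A'" using Eeq cc by simp
  moreover have "inj (\<lambda>a. {c,a})" by (rule injI) (auto simp: doubleton_eq_iff)
  ultimately have "A = A'" by (meson inj_image_eq_iff)
  then show "p = q" using pc qc cc by simp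
qed

lemma count_eq: "count_copies P3 (V,E) = (\<Sum>c\<in>V. d c choose 2)"
proof -
  have "{S \<in> subgraphs (V,E). graph_iso S P3} = mkP ` (SIGMA c:V. {A. A \<subseteq> N c \<and> card A = 2})"
  proof
    show "{S \<in> subgraphs (V,E). graph_iso S P3} \<subseteq> mkP ` (SIGMA c:V. {A. A \<subseteq> N c \<and> card A = 2})"
    proof
      fix S assume "S \<in> {S \<in> subgraphs (V,E). graph_iso S P3}"
      then obtain c A where "c \<in> V" "A \<subseteq> N c" "card A = 2" "S = mkP (c, A)" using copy_mkP by blast
      then show "S \<in> mkP ` (SIGMA c:V. {A. A \<subseteq> N c \<and> card A = 2})" by auto
    qed
    show "mkP ` (SIGMA c:V. {A. A \<subseteq> N c \<and> card A = 2}) \<subseteq> {S \<in> subgraphs (V,E). graph_iso S P3}"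
      using mkP_copy by auto
  qed
  then have "count_copies P3 (V,E) = card (mkP ` (SIGMA c:V. {A. A \<subseteq> N c \<and> card A = 2}))"
    unfolding count_copies_def by simp
  also have "\<dots> = card (SIGMA c:V. {A. A \<subseteq> N c \<and> card A = 2})"
    by (rule card_image[OF mkP_inj])
  also have "\<dots> = (\<Sum>c\<in>V. card {A. A \<subseteq> N c \<and> card A = 2})"
    using finV finN by (intro card_SigmaI) (auto intro: finite_subset[of _ "Pow (N _)"])
  also have "\<dots> = (\<Sum>c\<in>V. d c choose 2)"
    using finN by (simp add: n_subsets)
  finally show ?thesis .
qed

lemma count_Q: "2 * real (count_copies P3 (V,E)) = Q"
proof -
  have "\<And>n. 2 * real (n choose 2) = real n * (real n - 1)"
  proof -
    fix n :: nat
    show "2 * real (n choose 2) = real n * (real n - 1)"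
    proof (induction n)
      case 0 then show ?case by simp
    next
      case (Suc n)
      have "Suc n choose 2 = n + (n choose 2)"
        using binomial_Suc_Suc[of n 1] by (simp add: numeral_2_eq_2)
      then show ?case using Suc.IH by (simp add: algebra_simps)
    qed
  qed
  then show ?thesis unfolding count_eq Q_def by (simp add: sum_distrib_left)
qed

end



lemma contains_by_map:
  fixes F :: "'b graph" and phi :: "'b \<Rightarrow> 'a"
  assumes wfF: "wf_graph F" and inj: "inj_on phi (fst F)" and img: "phi ` fst F \<subseteq> V"
    and ed: "\<And>p q. p \<in> fst F \<Longrightarrow> q \<in> fst F \<Longrightarrow> {p,q} \<in> snd F \<Longrightarrow> {phi p, phi q} \<in> E"
  shows "contains (V,E) F"
proof -
  define S where "S = (phi ` fst F, (\<lambda>e. phi ` e) ` snd F)"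
  have edF: "\<And>e. e \<in> snd F \<Longrightarrow> \<exists>p q. e = {p,q} \<and> p \<in> fst F \<and> q \<in> fst F \<and> p \<noteq> q"
    using wfF unfolding wf_graph_def by blast
  have finF: "finite (fst F)" using wfF unfolding wf_graph_def by simp
  have wfS: "wf_graph S"
    unfolding wf_graph_def S_def
  proof (intro conjI)
    show "finite (fst (phi ` fst F, (`) phi ` snd F))" using finF by simp
    show "snd (phi ` fst F, (`) phi ` snd F) \<subseteq> {{u, v} |u v. u \<in> fst (phi ` fst F, (`) phi ` snd F) \<and> v \<in> fst (phi ` fst F, (`) phi ` snd F) \<and> u \<noteq> v}"
    proof
      fix e' assume "e' \<in> snd (phi ` fst F, (`) phi ` snd F)"
      then obtain e where e: "e \<in> snd F" "e' = phi ` e" by auto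
      then obtain p q where pq: "e = {p,q}" "p \<in> fst F" "q \<in> fst F" "p \<noteq> q" using edF by blast
      then have "phi p \<noteq> phi q" using inj inj_on_def by metis
      then show "e' \<in> {{u, v} |u v. u \<in> fst (phi ` fst F, (`) phi ` snd F) \<and> v \<in> fst (phi ` fst F, (`) phi ` snd F) \<and> u \<noteq> v}"
        using e pq by auto
    qed
  qed
  have sub: "S \<in> subgraphs (V,E)"
    unfolding subgraphs_def
  proof (intro CollectI conjI)
    show "wf_graph S" by (rule wfS)
    show "fst S \<subseteq> fst (V,E)" using img S_def by simp
    show "snd S \<subseteq> snd (V,E)"
    proof
      fix e' assume "e' \<in> snd S"
      then obtain e where e: "e \<in> snd F" "e' = phi ` e" unfolding S_def by auto
      then obtain p q where pq: "e = {p,q}" "p \<in> fst F" "q \<in> fst F" using edF by blast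
      then show "e' \<in> snd (V,E)" using ed e by auto
    qed
  qed
  define g where "g = inv_into (fst F) phi"
  have bij0: "bij_betw phi (fst F) (phi ` fst F)" using inj by (simp add: inj_on_imp_bij_betw)
  have bij: "bij_betw g (fst S) (fst F)" unfolding g_def S_def using bij_betw_inv_into[OF bij0] by simp
  have iso: "\<forall>s\<in>fst S. \<forall>s'\<in>fst S. {s,s'} \<in> snd S \<longleftrightarrow> {g s, g s'} \<in> snd F"
  proof (intro ballI)
    fix s s' assume s: "s \<in> fst S" and s': "s' \<in> fst S"
    then obtain p q where p: "p \<in> fst F" "s = phi p" and q: "q \<in> fst F" "s' = phi q" unfolding S_def by auto
    have gp: "g s = p" "g s' = q" unfolding g_def using inv_into_f_f[OF inj p(1)] inv_into_f_f[OF inj q(1)] p(2) q(2) by simp_all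
    show "{s,s'} \<in> snd S \<longleftrightarrow> {g s, g s'} \<in> snd F"
    proof
      assume "{s,s'} \<in> snd S"
      then obtain e where e: "e \<in> snd F" "{s,s'} = phi ` e" unfolding S_def by auto
      then obtain p' q' where pq: "e = {p',q'}" "p' \<in> fst F" "q' \<in> fst F" using edF by blast
      then have "{phi p, phi q} = {phi p', phi q'}" using e p q by auto
      then have "(phi p = phi p' \<and> phi q = phi q') \<or> (phi p = phi q' \<and> phi q = phi p')"
        by (simp add: doubleton_eq_iff)
      then have "{p,q} = {p',q'}"
      proof
        assume h: "phi p = phi p' \<and> phi q = phi q'"
        have "p = p'" using inj_onD[OF inj conjunct1[OF h] p(1) pq(2)] .
        moreover have "q = q'" using inj_onD[OF inj conjunct2[OF h] q(1) pq(3)] .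
        ultimately show ?thesis by simp
      next
        assume h: "phi p = phi q' \<and> phi q = phi p'"
        have "p = q'" using inj_onD[OF inj conjunct1[OF h] p(1) pq(3)] .
        moreover have "q = p'" using inj_onD[OF inj conjunct2[OF h] q(1) pq(2)] .
        ultimately show ?thesis by (simp add: insert_commute)
      qed
      then show "{g s, g s'} \<in> snd F" using gp e pq by simp
    next
      assume "{g s, g s'} \<in> snd F"
      then have "{p,q} \<in> snd F" using gp by simp
      then have "phi ` {p,q} \<in> snd S" unfolding S_def snd_conv by (rule imageI)
      then show "{s,s'} \<in> snd S" using p q by simp
    qed
  qed
  have "graph_iso S F" unfolding graph_iso_def using bij iso by blast
  then show ?thesis unfolding contains_def using sub by blast
qed

lemma chrom_exists:
  fixes G :: "'b graph"
  assumes wfG: "wf_graph G"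
  shows "\<exists>k c. proper_coloring G k c"
proof -
  have fin: "finite (fst G)" using wfG unfolding wf_graph_def by simp
  obtain h where h: "bij_betw h (fst G) {0..<card (fst G)}" using ex_bij_betw_finite_nat[OF fin] by blast
  have "proper_coloring G (card (fst G)) h"
    unfolding proper_coloring_def
  proof (intro conjI ballI impI)
    fix v assume "v \<in> fst G" then show "h v < card (fst G)" using h bij_betwE by fastforce
  next
    fix u v assume u: "u \<in> fst G" and v: "v \<in> fst G" and e: "{u,v} \<in> snd G"
    have "u \<noteq> v"
    proof
      assume "u = v"
      then have "{u} \<in> snd G" using e by simp
      then show False using wfG unfolding wf_graph_def by (auto simp: doubleton_eq_iff)
    qed
    then show "h u \<noteq> h v" using h u v unfolding bij_betw_def inj_on_def by blast
  qed
  then show ?thesis by blast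
qed

lemma F_props:
  fixes F :: "'b graph"
  assumes wfF: "wf_graph F" and chi: "chromatic_number F = 3" and crit: "color_critical_edge F e"
  shows "\<exists>c a b. (\<forall>w\<in>fst F. c w < (2::nat)) \<and> a \<in> fst F \<and> b \<in> fst F \<and> a \<noteq> b \<and> {a,b} \<in> snd F \<and> c a = c b
     \<and> (\<forall>p\<in>fst F. \<forall>q\<in>fst F. {p,q} \<in> snd F \<longrightarrow> {p,q} \<noteq> {a,b} \<longrightarrow> c p \<noteq> c q)"
proof -
  define F' where "F' = (fst F, snd F - {e})"
  have wfF': "wf_graph F'" using wfF unfolding F'_def wf_graph_def by auto
  have lt: "chromatic_number F' < 3" using crit chi unfolding color_critical_edge_def F'_def by simp
  obtain c where c: "proper_coloring F' (chromatic_number F') c"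
    using LeastI_ex[of "\<lambda>k. \<exists>c. proper_coloring F' k c"] chrom_exists[OF wfF'] unfolding chromatic_number_def by blast
  have c2: "\<forall>w\<in>fst F. c w < 2"
  proof
    fix w assume "w \<in> fst F"
    then have "c w < chromatic_number F'" using c unfolding proper_coloring_def F'_def by simp
    then show "c w < 2" using lt by linarith
  qed
  have cF': "\<forall>p\<in>fst F. \<forall>q\<in>fst F. {p,q} \<in> snd F - {e} \<longrightarrow> c p \<noteq> c q"
    using c unfolding proper_coloring_def F'_def by simp
  have notF: "\<not> proper_coloring F 2 c"
  proof
    assume "proper_coloring F 2 c"
    then have "chromatic_number F \<le> 2" unfolding chromatic_number_def by (intro Least_le) blast
    then show False using chi by simp
  qed
  then have "\<not> (\<forall>u\<in>fst F. \<forall>v\<in>fst F. {u, v} \<in> snd F \<longrightarrow> c u \<noteq> c v)"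
    using c2 unfolding proper_coloring_def by simp
  then obtain a b where ab: "a \<in> fst F" "b \<in> fst F" "{a,b} \<in> snd F" "c a = c b"
    by blast
  have abe: "{a,b} = e" using cF' ab by blast
  have "a \<noteq> b"
  proof
    assume "a = b"
    then have "{a} \<in> snd F" using ab by simp
    then show False using wfF unfolding wf_graph_def by (auto simp: doubleton_eq_iff)
  qed
  have rest: "\<forall>p\<in>fst F. \<forall>q\<in>fst F. {p,q} \<in> snd F \<longrightarrow> {p,q} \<noteq> {a,b} \<longrightarrow> c p \<noteq> c q"
    using cF' abe by simp
  show ?thesis using c2 ab rest \<open>a \<noteq> b\<close> by blast
qed

context gr begin

lemma embed:
  fixes F :: "'b graph"
  assumes wfF: "wf_graph F" and chi: "chromatic_number F = 3" and crit: "color_critical_edge F e"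
    and nh: "\<not> hfree (card (fst F))"
  shows "contains (V,E) F"
proof -
  define t where "t = card (fst F)"
  obtain u v Y Z where e: "{u,v} \<in> E" and Y: "Y \<subseteq> N u \<inter> N v" "card Y = t" and Z: "Z \<subseteq> V" "card Z = t"
    and ZY: "Z \<inter> Y = {}" "u \<notin> Z" "v \<notin> Z" and comp: "\<forall>z\<in>Z. \<forall>y\<in>Y. {z,y} \<in> E"
    using nh unfolding hfree_def t_def by blast
  obtain c a b where c2: "\<forall>w\<in>fst F. c w < (2::nat)" and ab: "a \<in> fst F" "b \<in> fst F" "a \<noteq> b" "{a,b} \<in> snd F" "c a = c b"
    and cpr: "\<forall>p\<in>fst F. \<forall>q\<in>fst F. {p,q} \<in> snd F \<longrightarrow> {p,q} \<noteq> {a,b} \<longrightarrow> c p \<noteq> c q"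
    using F_props[OF wfF chi crit] by blast
  have finF: "finite (fst F)" using wfF unfolding wf_graph_def by simp
  define col0 where "col0 = {w\<in>fst F. c w = c a} - {a,b}"
  define col1 where "col1 = {w\<in>fst F. c w \<noteq> c a}"
  have finZ: "finite Z" using Z(1) finV finite_subset by blast
  have finY: "finite Y" using Y(1) finN finite_subset by blast
  have c0: "card col0 \<le> card Z" using Z(2) t_def card_mono[OF finF, of col0] col0_def by auto
  have c1: "card col1 \<le> card Y" using Y(2) t_def card_mono[OF finF, of col1] col1_def by auto
  obtain h0 where h0: "h0 ` col0 \<subseteq> Z" "inj_on h0 col0"
    using card_le_inj[OF _ finZ c0] finF col0_def by auto
  obtain h1 where h1: "h1 ` col1 \<subseteq> Y" "inj_on h1 col1"
    using card_le_inj[OF _ finY c1] finF col1_def by auto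
  define phi where "phi = (\<lambda>w. if w = a then u else if w = b then v else if c w = c a then h0 w else h1 w)"
  have uv: "u \<noteq> v" "u \<in> V" "v \<in> V" using edge[OF e] by auto
  have uY: "u \<notin> Y" "v \<notin> Y" using Y(1) N_irr by auto
  have ph0: "\<And>w. w \<in> col0 \<Longrightarrow> phi w = h0 w \<and> h0 w \<in> Z" unfolding phi_def col0_def using h0(1) col0_def by auto
  have ph1: "\<And>w. w \<in> col1 \<Longrightarrow> phi w = h1 w \<and> h1 w \<in> Y" unfolding phi_def col1_def using h1(1) col1_def ab(5) by auto
  have cases: "\<And>w. w \<in> fst F \<Longrightarrow> w = a \<or> w = b \<or> w \<in> col0 \<or> w \<in> col1" unfolding col0_def col1_def by auto
  have pa: "phi a = u" and pb: "phi b = v" unfolding phi_def using ab(3) by auto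
  have inj: "inj_on phi (fst F)"
  proof (rule inj_onI)
    fix p q assume p: "p \<in> fst F" and q: "q \<in> fst F" and eq: "phi p = phi q"
    have d01: "col0 \<inter> col1 = {}" "a \<notin> col0" "b \<notin> col0" "a \<notin> col1" "b \<notin> col1"
      unfolding col0_def col1_def using ab(5) by auto
    show "p = q"
      using cases[OF p] cases[OF q] eq pa pb ph0 ph1 uv(1) ZY uY h0(2) h1(2) d01
      unfolding inj_on_def by (smt (verit) disjoint_iff)
  qed
  have img: "phi ` fst F \<subseteq> V"
  proof
    fix s assume "s \<in> phi ` fst F"
    then obtain w where w: "w \<in> fst F" "s = phi w" by auto
    have "Y \<subseteq> V" using Y(1) N_sub by auto
    then show "s \<in> V" using cases[OF w(1)] w pa pb ph0 ph1 uv Z(1) by auto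
  qed
  have ed: "{phi p, phi q} \<in> E" if p: "p \<in> fst F" and q: "q \<in> fst F" and pq: "{p,q} \<in> snd F" for p q
  proof (cases "{p,q} = {a,b}")
    case True
    then have "(p = a \<and> q = b) \<or> (p = b \<and> q = a)" by (auto simp: doubleton_eq_iff)
    then show ?thesis using pa pb e by (auto simp: insert_commute)
  next
    case False
    then have cne: "c p \<noteq> c q" using cpr p q pq by blast
    have side: "phi x \<in> {u,v} \<union> Z" "phi y \<in> Y" if "x \<in> fst F" "y \<in> fst F" "c x = c a" "c y \<noteq> c a" for x y
    proof -
      show "phi x \<in> {u,v} \<union> Z" using cases[OF that(1)] pa pb ph0 that(3) col1_def by auto
      have "y \<in> col1" using that(2,4) col1_def by auto
      then show "phi y \<in> Y" using ph1 by auto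
    qed
    have adj: "{s, y} \<in> E" if "s \<in> {u,v} \<union> Z" "y \<in> Y" for s y
      using that comp Y(1) N_iff by (auto simp: insert_commute)
    have "c p < 2" "c q < 2" "c a < 2" using c2 p q ab(1) by auto
    then have "c p = c a \<or> c q = c a" using cne by presburger
    then show ?thesis
    proof
      assume "c p = c a"
      then have "c q \<noteq> c a" using cne by simp
      then show ?thesis using side[OF p q \<open>c p = c a\<close>] adj by blast
    next
      assume "c q = c a"
      then have "c p \<noteq> c a" using cne by simp
      then have "{phi q, phi p} \<in> E" using side[OF q p \<open>c q = c a\<close>] adj by blast
      then show ?thesis by (simp add: insert_commute)
    qed
  qed
  show ?thesis by (rule contains_by_map[OF wfF inj img ed])
qed

end



lemma T_edge: "{x,y} \<in> snd (turan_graph 2 n) \<longleftrightarrow> x < n \<and> y < n \<and> x mod 2 \<noteq> y mod 2"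
  unfolding turan_graph_def by (auto simp: doubleton_eq_iff)

lemma T_wf: "wf_graph (turan_graph 2 n)"
  unfolding wf_graph_def turan_graph_def by auto

lemma T_on: "turan_graph 2 n \<in> graphs_on n"
  unfolding graphs_on_def using T_wf by (simp add: turan_graph_def)

lemma T_free:
  fixes F :: "'b graph"
  assumes chi: "chromatic_number F = 3"
  shows "F_free F (turan_graph 2 n)"
  unfolding F_free_def contains_def
proof
  assume "\<exists>S\<in>subgraphs (turan_graph 2 n). graph_iso S F"
  then obtain S where S: "S \<in> subgraphs (turan_graph 2 n)" "graph_iso S F" by blast
  obtain f where bij: "bij_betw f (fst S) (fst F)"
    and iso: "\<forall>u\<in>fst S. \<forall>v\<in>fst S. {u,v} \<in> snd S \<longleftrightarrow> {f u, f v} \<in> snd F"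
    using S(2) unfolding graph_iso_def by blast
  have sT: "snd S \<subseteq> snd (turan_graph 2 n)" using S(1) unfolding subgraphs_def by auto
  define g where "g = inv_into (fst S) f"
  have g: "\<And>w. w \<in> fst F \<Longrightarrow> g w \<in> fst S \<and> f (g w) = w"
  proof -
    fix w assume "w \<in> fst F"
    then have "w \<in> f ` fst S" using bij by (simp add: bij_betw_def)
    then show "g w \<in> fst S \<and> f (g w) = w" unfolding g_def by (simp add: inv_into_into f_inv_into_f)
  qed
  have "proper_coloring F 2 (\<lambda>w. g w mod 2)"
    unfolding proper_coloring_def
  proof (intro conjI ballI impI)
    fix w assume "w \<in> fst F" then show "g w mod 2 < 2" by simp
  next
    fix p q assume p: "p \<in> fst F" and q: "q \<in> fst F" and e: "{p,q} \<in> snd F"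
    have "{f (g p), f (g q)} \<in> snd F" using e g p q by simp
    then have "{g p, g q} \<in> snd S" using iso g p q by blast
    then have "{g p, g q} \<in> snd (turan_graph 2 n)" using sT by blast
    then show "g p mod 2 \<noteq> g q mod 2" using T_edge by blast
  qed
  then have "chromatic_number F \<le> 2" unfolding chromatic_number_def by (intro Least_le) blast
  then show False using chi by simp
qed

lemma cnt_parity: "card {u\<in>{0..<n}. odd u} = n div 2 \<and> card {u\<in>{0..<n}. even u} = (n+1) div 2"
proof (induction n)
  case 0 then show ?case by simp
next
  case (Suc n)
  have s: "{u\<in>{0..<Suc n}. P u} = (if P n then insert n {u\<in>{0..<n}. P u} else {u\<in>{0..<n}. P u})" for P
    by (auto simp: less_Suc_eq)
  show ?case
  proof (cases "even n")
    case True
    then have "card {u\<in>{0..<Suc n}. odd u} = n div 2" "card {u\<in>{0..<Suc n}. even u} = Suc ((n+1) div 2)"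
      using Suc.IH s[of odd] s[of even] by auto
    then show ?thesis using True by (auto elim: evenE)
  next
    case False
    then have "card {u\<in>{0..<Suc n}. odd u} = Suc (n div 2)" "card {u\<in>{0..<Suc n}. even u} = (n+1) div 2"
      using Suc.IH s[of odd] s[of even] by auto
    then show ?thesis using False by (auto elim: oddE)
  qed
qed

lemma T_Q: "gr.Q {0..<n} (snd (turan_graph 2 n)) = B n"
proof -
  have wf: "wf_graph ({0..<n}, snd (turan_graph 2 n))" using T_wf by (simp add: turan_graph_def)
  interpret G: gr "{0..<n}" "snd (turan_graph 2 n)" by (rule gr.intro[OF wf])
  define a where "a = n div 2"
  define b where "b = (n+1) div 2"
  have ab: "a + b = n" unfolding a_def b_def by presburger
  have Nv: "G.N v = {u\<in>{0..<n}. u mod 2 \<noteq> v mod 2}" if v: "v < n" for v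
    unfolding G.N_def using T_edge v by auto
  have dv: "real (G.d v) = (if even v then real a else real b)" if v: "v \<in> {0..<n}" for v
  proof (cases "even v")
    case True
    then have "{u\<in>{0..<n}. u mod 2 \<noteq> v mod 2} = {u\<in>{0..<n}. odd u}" by (auto simp: even_iff_mod_2_eq_zero)
    then show ?thesis using Nv v True cnt_parity a_def by auto
  next
    case False
    then have "{u\<in>{0..<n}. u mod 2 \<noteq> v mod 2} = {u\<in>{0..<n}. even u}" by (auto simp: even_iff_mod_2_eq_zero)
    then show ?thesis using Nv v False cnt_parity b_def by auto
  qed
  have "G.Q = (\<Sum>v\<in>{0..<n}. if even v then real a * (real a - 1) else real b * (real b - 1))"
    unfolding G.Q_def by (rule sum.cong) (auto simp: dv)
  also have "\<dots> = (\<Sum>v\<in>{0..<n} \<inter> {v. even v}. real a * (real a - 1)) + (\<Sum>v\<in>{0..<n} \<inter> - {v. even v}. real b * (real b - 1))"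
    by (rule sum.If_cases) simp
  also have "{0..<n} \<inter> {v. even v} = {u\<in>{0..<n}. even u}" by auto
  also have "{0..<n} \<inter> - {v. even v} = {u\<in>{0..<n}. odd u}" by auto
  also have "(\<Sum>v\<in>{u\<in>{0..<n}. even u}. real a * (real a - 1)) + (\<Sum>v\<in>{u\<in>{0..<n}. odd u}. real b * (real b - 1))
      = real b * (real a * (real a - 1)) + real a * (real b * (real b - 1))"
    using cnt_parity[of n] a_def b_def by simp
  also have "\<dots> = real a * real b * (real a + real b - 2)" by (simp add: algebra_simps)
  also have "\<dots> = B n" unfolding B_def a_def[symmetric] b_def[symmetric] using ab
    by (metis (mono_tags, lifting) mult.commute mult.left_commute of_nat_add)
  finally show ?thesis .
qed

theorem theorem1p1:
  fixes F :: "'b graph"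
  assumes "wf_graph F"
    and "chromatic_number F = 3"
    and "\<exists>e. color_critical_edge F e"
  shows "\<exists>n0. \<forall>n\<ge>n0. ex_gen n P3 F = count_copies P3 (turan_graph 2 n)"
proof -
  obtain e where crit: "color_critical_edge F e" using assms(3) by blast
  define t where "t = card (fst F)"
  obtain N0 where N0: "\<forall>(V :: nat set) E. gr V E \<longrightarrow> gr.hfree V E t \<longrightarrow> card V \<ge> N0 \<longrightarrow> gr.Q V E \<le> B (card V)"
    using core[where 'a = nat, of t] by blast
  show ?thesis
  proof (intro exI allI impI)
    fix n assume n: "n \<ge> N0"
    define M where "M = {count_copies P3 G |G. G \<in> graphs_on n \<and> F_free F G}"
    have sub: "{G. G \<in> graphs_on n \<and> F_free F G} \<subseteq> {{0..<n}} \<times> Pow (Pow {0..<n})"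
    proof
      fix G assume "G \<in> {G. G \<in> graphs_on n \<and> F_free F G}"
      then have G: "wf_graph G" "fst G = {0..<n}" unfolding graphs_on_def by auto
      then have "snd G \<subseteq> Pow {0..<n}" unfolding wf_graph_def by auto
      then show "G \<in> {{0..<n}} \<times> Pow (Pow {0..<n})" using G(2) by (cases G) auto
    qed
    have "M = (\<lambda>G. count_copies P3 G) ` {G. G \<in> graphs_on n \<and> F_free F G}" unfolding M_def by blast
    then have fin: "finite M" using finite_subset[OF sub] by simp
    have Tin: "count_copies P3 (turan_graph 2 n) \<in> M"
      unfolding M_def using T_on T_free[OF assms(2)] by blast
    have QT: "2 * real (count_copies P3 (turan_graph 2 n)) = B n"
    proof -
      have wf: "wf_graph ({0..<n}, snd (turan_graph 2 n))" using T_wf by (simp add: turan_graph_def)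
      have "turan_graph 2 n = ({0..<n}, snd (turan_graph 2 n))" by (simp add: turan_graph_def)
      then show ?thesis using gr.count_Q[OF gr.intro[OF wf]] T_Q by metis
    qed
    have le: "y \<le> count_copies P3 (turan_graph 2 n)" if y: "y \<in> M" for y
    proof -
      obtain G where G: "y = count_copies P3 G" "G \<in> graphs_on n" "F_free F G" using y unfolding M_def by blast
      obtain V E where GVE: "G = (V, E)" by (cases G)
      have wfG: "wf_graph (V,E)" and V: "V = {0..<n}" using G(2) GVE unfolding graphs_on_def by auto
      interpret H: gr V E by (rule gr.intro[OF wfG])
      have hf: "H.hfree t"
      proof (rule ccontr)
        assume "\<not> H.hfree t"
        then have "contains (V,E) F" using H.embed[OF assms(1,2) crit] t_def by blast
        then show False using G(3) GVE unfolding F_free_def by simp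
      qed
      have "H.Q \<le> B (card V)" using N0[rule_format, OF H.gr_axioms hf] n V by simp
      then have "2 * real y \<le> 2 * real (count_copies P3 (turan_graph 2 n))"
        using H.count_Q QT G(1) GVE V by simp
      then show ?thesis by simp
    qed
    have "ex_gen n P3 F = Max M" unfolding ex_gen_def M_def by simp
    also have "\<dots> = count_copies P3 (turan_graph 2 n)"
      by (rule Max_eqI[OF fin le Tin])
    finally show "ex_gen n P3 F = count_copies P3 (turan_graph 2 n)" .
  qed
qed


end
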